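(* Let $k\ge1$, let $M=\Gamma(\mathbb Z\,\overrightarrow{\times}\,G,(k,0))$ with $G$ a Dedekind $\sigma$-complete $\ell$-group, and let $F:\mathbb R^2\to M$ be a two-dimensional spectral resolution. Then every non-empty $T_i$, $i\in\{1,\ldots,k\}$, has at most $k$ characteristic points, and $F$ has at most $k^2$ characteristic points.
   Context: $\mathbb Z\,\overrightarrow{\times}\,G$ is $\mathbb Z\times G$ with lexicographic order; $\Gamma(K,v)=([0,v];\oplus,',0,v)$ with $a\oplus b=(a+b)\wedge v$. A two-dimensional spectral resolution is $F:\mathbb R^2\to M$ such that: (i) $F$ is monotone; (ii) $\bigvee_{(s,t)}F(s,t)=1$; (iii) $F(s,t)=\bigvee_{(s',t')\ll(s,t)}F(s',t')$; (iv) $\bigwedge_sF(s,t)=0=\bigwedge_tF(s,t)$; (v) $0\le F(b_1,b_2)-F(a_1,b_2)-F(b_1,a_2)+F(a_1,a_2)\le1$ for $a_1\le b_1$, $a_2\le b_2$ (in the group). $M_j=\{(j,g)\in M\}$, $T_j=\{(s,t)\colon F(s,t)\in M_j\}$. For $i\ge1$ and $(s,t)\in T_i$, $\pi_i(s,t)=(\inf\{r\colon(r,t)\in T_i\},\inf\{r\colon(s,r)\in T_i\})$; characteristic points of $T_i$ are the $\pi_i(s,t)$, $(s,t)\in T_i$; characteristic points of $F$ are those of the $T_i$, $i\ge1$. *)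

theory Defs
  imports Main "HOL-Library.Lattice_Algebras" "HOL-Library.Product_Plus" "HOL-Library.Countable_Set"
begin

(* Lexicographic order on Z x G  (the group Z lex-times G; group operations are componentwise,
   provided by HOL-Library.Product_Plus) *)
definition lex_le :: "int \<times> 'g::order \<Rightarrow> int \<times> 'g \<Rightarrow> bool" where
  "lex_le x y \<longleftrightarrow> fst x < fst y \<or> (fst x = fst y \<and> snd x \<le> snd y)"

definition gamma_lex :: "nat \<Rightarrow> (int \<times> 'g::{order,zero}) set" where
  "gamma_lex k = {x. lex_le (0, 0) x \<and> lex_le x (int k, 0)}"

definition is_sup_in :: "(int \<times> 'g::order) set \<Rightarrow> (int \<times> 'g) set \<Rightarrow> int \<times> 'g \<Rightarrow> bool" where
  "is_sup_in A S x \<longleftrightarrow> x \<in> A \<and> (\<forall>y\<in>S. lex_le y x) \<and>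
     (\<forall>z\<in>A. (\<forall>y\<in>S. lex_le y z) \<longrightarrow> lex_le x z)"

definition is_inf_in :: "(int \<times> 'g::order) set \<Rightarrow> (int \<times> 'g) set \<Rightarrow> int \<times> 'g \<Rightarrow> bool" where
  "is_inf_in A S x \<longleftrightarrow> x \<in> A \<and> (\<forall>y\<in>S. lex_le x y) \<and>
     (\<forall>z\<in>A. (\<forall>y\<in>S. lex_le z y) \<longrightarrow> lex_le z x)"

definition dedekind_sigma_complete :: "'g::order itself \<Rightarrow> bool" where
  "dedekind_sigma_complete _ \<longleftrightarrow>
     (\<forall>S::'g set. countable S \<and> S \<noteq> {} \<and> bdd_above S \<longrightarrow>
        (\<exists>x. (\<forall>y\<in>S. y \<le> x) \<and> (\<forall>z. (\<forall>y\<in>S. y \<le> z) \<longrightarrow> x \<le> z)))"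

definition spectral_resolution2 ::
  "nat \<Rightarrow> (real \<times> real \<Rightarrow> int \<times> 'g::lattice_ab_group_add) \<Rightarrow> bool" where
  "spectral_resolution2 k F \<longleftrightarrow>
     (\<forall>p. F p \<in> gamma_lex k) \<and>
     (\<forall>s t s' t'. s \<le> s' \<and> t \<le> t' \<longrightarrow> lex_le (F (s, t)) (F (s', t'))) \<and>
     is_sup_in (gamma_lex k) (range F) (int k, 0) \<and>
     (\<forall>s t. is_sup_in (gamma_lex k) {F (s', t') | s' t'. s' < s \<and> t' < t} (F (s, t))) \<and>
     (\<forall>t. is_inf_in (gamma_lex k) {F (s, t) | s. True} (0, 0)) \<and>
     (\<forall>s. is_inf_in (gamma_lex k) {F (s, t) | t. True} (0, 0)) \<and>
     (\<forall>a1 b1 a2 b2. a1 \<le> b1 \<and> a2 \<le> b2 \<longrightarrow>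
        lex_le (0, 0) (F (b1, b2) - F (a1, b2) - F (b1, a2) + F (a1, a2)) \<and>
        lex_le (F (b1, b2) - F (a1, b2) - F (b1, a2) + F (a1, a2)) (int k, 0))"

definition level_set :: "(real \<times> real \<Rightarrow> int \<times> 'g) \<Rightarrow> int \<Rightarrow> (real \<times> real) set" where
  "level_set F j = {p. fst (F p) = j}"

definition char_proj :: "(real \<times> real \<Rightarrow> int \<times> 'g) \<Rightarrow> int \<Rightarrow> real \<times> real \<Rightarrow> real \<times> real" where
  "char_proj F i p = (Inf {r. (r, snd p) \<in> level_set F i}, Inf {r. (fst p, r) \<in> level_set F i})"

definition char_points :: "(real \<times> real \<Rightarrow> int \<times> 'g) \<Rightarrow> int \<Rightarrow> (real \<times> real) set" where
  "char_points F i = char_proj F i ` level_set F i"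

definition all_char_points :: "(real \<times> real \<Rightarrow> int \<times> 'g) \<Rightarrow> (real \<times> real) set" where
  "all_char_points F = (\<Union>i\<in>{i. i \<ge> 1}. char_points F i)"

end

theory Submission imports Defs begin

locale hfun =
  fixes h :: "real \<Rightarrow> real \<Rightarrow> int" and k :: nat
  assumes mono: "s \<le> s' \<Longrightarrow> t \<le> t' \<Longrightarrow> h s t \<le> h s' t'"
    and nonneg: "0 \<le> h s t" and bound: "h s t \<le> int k"
    and rect: "a1 \<le> b1 \<Longrightarrow> a2 \<le> b2 \<Longrightarrow> h a1 b2 + h b1 a2 \<le> h b1 b2 + h a1 a2"
    and z1: "\<exists>s. h s t = 0" and z2: "\<exists>t. h s t = 0"
    and lc: "\<exists>s'<s. \<exists>t'<t. h s' t' = h s t"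
begin

definition alpha where "alpha i t = Inf {r. h r t = i}"
definition beta where "beta i s = Inf {r. h s r = i}"

lemma bddA: assumes "i \<ge> 1" shows "bdd_below {r. h r t = i}"
proof -
  obtain s0 where s0: "h s0 t = 0" using z1 by blast
  have "s0 \<le> r" if "h r t = i" for r
  proof (rule ccontr)
    assume "\<not> s0 \<le> r" then have "h r t \<le> h s0 t" by (intro mono) auto
    with s0 that assms show False by auto
  qed
  then show ?thesis by (auto simp: bdd_below_def)
qed

lemma bddB: assumes "i \<ge> 1" shows "bdd_below {r. h s r = i}"
proof -
  obtain t0 where t0: "h s t0 = 0" using z2 by blast
  have "t0 \<le> r" if "h s r = i" for r
  proof (rule ccontr)
    assume "\<not> t0 \<le> r" then have "h s r \<le> h s t0" by (intro mono) auto
    with t0 that assms show False by auto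
  qed
  then show ?thesis by (auto simp: bdd_below_def)
qed

lemma A1: assumes "i \<ge> 1" "h s t = i" "r > alpha i t" shows "h r t \<ge> i"
proof -
  have ne: "{r. h r t = i} \<noteq> {}" using assms by auto
  obtain l where "h l t = i" "l < r" using cInf_lessD[OF ne] assms(3) unfolding alpha_def by auto
  then show ?thesis using mono[of l r t t] by auto
qed

lemma A2: assumes "i \<ge> 1" "h s t = i" "r < alpha i t" shows "h r t < i"
proof -
  have "alpha i t \<le> s" unfolding alpha_def using assms bddA by (intro cInf_lower) auto
  then have "h r t \<le> i" using mono[of r s t t] assms by auto
  moreover have "h r t \<noteq> i"
  proof
    assume "h r t = i"
    then have "alpha i t \<le> r" unfolding alpha_def using assms bddA by (intro cInf_lower) auto
    with assms show False by auto
  qed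
  ultimately show ?thesis by auto
qed

lemma A3: assumes "i \<ge> 1" "h s t = i" shows "alpha i t < s"
proof -
  obtain s' t' where st: "s' < s" "t' < t" "h s' t' = h s t" using lc by blast
  have "h s' t' \<le> h s' t" "h s' t \<le> h s t" using st mono[of s' s' t' t] mono[of s' s t t] by auto
  then have "h s' t = i" using st assms by auto
  then have "alpha i t \<le> s'" unfolding alpha_def using assms bddA by (intro cInf_lower) auto
  with st show ?thesis by auto
qed

lemma B1: assumes "i \<ge> 1" "h s t = i" "r > beta i s" shows "h s r \<ge> i"
proof -
  have ne: "{r. h s r = i} \<noteq> {}" using assms by auto
  obtain l where "h s l = i" "l < r" using cInf_lessD[OF ne] assms(3) unfolding beta_def by auto
  then show ?thesis using mono[of s s l r] by auto
qed

lemma B2: assumes "i \<ge> 1" "h s t = i" "r < beta i s" shows "h s r < i"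
proof -
  have "beta i s \<le> t" unfolding beta_def using assms bddB by (intro cInf_lower) auto
  then have "h s r \<le> i" using mono[of s s r t] assms by auto
  moreover have "h s r \<noteq> i"
  proof
    assume "h s r = i"
    then have "beta i s \<le> r" unfolding beta_def using assms bddB by (intro cInf_lower) auto
    with assms show False by auto
  qed
  ultimately show ?thesis by auto
qed

lemma B3: assumes "i \<ge> 1" "h s t = i" shows "beta i s < t"
proof -
  obtain s' t' where st: "s' < s" "t' < t" "h s' t' = h s t" using lc by blast
  have "h s' t' \<le> h s t'" "h s t' \<le> h s t" using st mono[of s' s t' t'] mono[of s s t' t] by auto
  then have "h s t' = i" using st assms by auto
  then have "beta i s \<le> t'" unfolding beta_def using assms bddB by (intro cInf_lower) auto
  with st show ?thesis by auto
qed

definition jumpat where "jumpat a t \<longleftrightarrow> (\<forall>r' r. r' < a \<longrightarrow> a < r \<longrightarrow> h r' t < h r t)"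
definition J where "J = {a. \<exists>t. jumpat a t}"

lemma alpha_J: assumes "i \<ge> 1" "h s t = i" shows "alpha i t \<in> J"
proof -
  have "jumpat (alpha i t) t" unfolding jumpat_def
  proof (intro allI impI)
    fix r' r assume "r' < alpha i t" "alpha i t < r"
    then show "h r' t < h r t" using A1[OF assms] A2[OF assms] by fastforce
  qed
  then show ?thesis unfolding J_def by auto
qed

lemma jump_up: assumes "jumpat a t" "t \<le> T" shows "jumpat a T"
  unfolding jumpat_def
proof (intro allI impI)
  fix r' r assume "r' < a" "a < r"
  then have "h r' t < h r t" using assms unfolding jumpat_def by auto
  moreover have "h r' T + h r t \<le> h r T + h r' t" using rect[of r' r t T] \<open>r' < a\<close> \<open>a < r\<close> assms by auto
  ultimately show "h r' T < h r T" by auto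
qed

lemma below_ex: assumes "finite A" "\<forall>x\<in>A. x < (b::real)" shows "\<exists>r'<b. \<forall>x\<in>A. x < r'"
proof (cases "A = {}")
  case True then show ?thesis by (intro exI[of _ "b - 1"]) auto
next
  case False
  have "Max A < b" using assms False by auto
  moreover have "x \<le> Max A" if "x \<in> A" for x using assms(1) that by auto
  ultimately show ?thesis
  proof (intro exI[of _ "(Max A + b)/2"] conjI ballI)
    show "(Max A + b)/2 < b" using \<open>Max A < b\<close> by simp
  next
    fix x assume "x \<in> A"
    then have "x \<le> Max A" using assms(1) by simp
    then show "x < (Max A + b)/2" using \<open>Max A < b\<close> by simp
  qed
qed

lemma count: assumes "finite S" "\<forall>a\<in>S. jumpat a T"
  shows "\<forall>r. (\<forall>x\<in>S. x < r) \<longrightarrow> int (card S) \<le> h r T"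
  using assms
proof (induction S rule: finite_linorder_max_induct)
  case empty then show ?case using nonneg by simp
next
  case (insert b A)
  have prem: "\<forall>a\<in>insert b A. jumpat a T" by (rule insert.prems)
  then have jb: "jumpat b T" by blast
  have IH: "\<forall>r. (\<forall>x\<in>A. x < r) \<longrightarrow> int (card A) \<le> h r T"
    using insert.IH prem by blast
  have bA: "b \<notin> A" using insert.hyps(2) by blast
  have cd: "card (insert b A) = Suc (card A)" using insert.hyps(1) bA by simp
  show ?case
  proof (intro allI impI)
    fix r assume r: "\<forall>x\<in>insert b A. x < r"
    then have br: "b < r" by blast
    obtain r' where r': "r' < b" "\<forall>x\<in>A. x < r'" using below_ex[OF insert.hyps(1,2)] by blast
    have c1: "int (card A) \<le> h r' T" using IH r'(2) by blast
    have c2: "h r' T < h r T" using jb r'(1) br unfolding jumpat_def by blast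
    show "int (card (insert b A)) \<le> h r T" using c1 c2 cd by simp
  qed
qed

lemma finite_sub: assumes "finite S" "S \<subseteq> J" shows "card S \<le> k"
proof (cases "S = {}")
  case True then show ?thesis by auto
next
  case False
  define tw where "tw a = (SOME t. jumpat a t)" for a
  have tw: "jumpat a (tw a)" if "a \<in> S" for a
    using that assms unfolding tw_def J_def by (auto intro: someI_ex)
  define T where "T = Max (tw ` S)"
  have "jumpat a T" if "a \<in> S" for a
    using jump_up[OF tw[OF that]] that assms unfolding T_def by auto
  then have "int (card S) \<le> h (Max S + 1) T"
    using count[OF assms(1)] assms(1) by (meson Max_ge less_add_one order_le_less_trans)
  then show ?thesis using bound[of "Max S + 1" T] by auto
qed

lemma J_fin: "finite J \<and> card J \<le> k"
proof (cases "finite J")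
  case True then show ?thesis using finite_sub by auto
next
  case False
  then obtain S where "S \<subseteq> J" "finite S" "card S = Suc k"
    using infinite_arbitrarily_large by blast
  then show ?thesis using finite_sub by fastforce
qed

lemma inj_aux:
  assumes i: "i \<ge> 1" and st: "h s t = i" and st': "h s' t' = i" and eq: "alpha i t = alpha i t'"
  shows "\<not> beta i s < beta i s'"
proof
  assume lt: "beta i s < beta i s'"
  define r where "r = min s s'"
  have "alpha i t < s" "alpha i t < s'" using A3[OF i st] A3[OF i st'] eq by auto
  then have "r > alpha i t" unfolding r_def by auto
  then have hr: "h r t \<ge> i" using A1[OF i st] by auto
  have Yt: "beta i s < t" using B3[OF i st] .
  define r' where "r' = (beta i s + min (beta i s') t) / 2"
  have r'1: "beta i s < r'" "r' < beta i s'" "r' < t" using lt Yt unfolding r'_def by auto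
  have "h s r' \<ge> i" using B1[OF i st r'1(1)] .
  moreover have "h r t + h s r' \<le> h s t + h r r'" using rect[of r s r' t] r'1 unfolding r_def by auto
  ultimately have "h r r' \<ge> i" using hr st by auto
  moreover have "h r r' \<le> h s' r'" unfolding r_def by (intro mono) auto
  moreover have "h s' r' < i" using B2[OF i st' r'1(2)] .
  ultimately show False by auto
qed

lemma cp_bound:
  assumes i: "i \<ge> 1"
  defines "C \<equiv> (\<lambda>(s,t). (alpha i t, beta i s)) ` {(s,t). h s t = i}"
  shows "finite C \<and> card C \<le> k"
proof -
  have inj: "inj_on fst C"
  proof (rule inj_onI)
    fix p q assume "p \<in> C" "q \<in> C" "fst p = fst q"
    then obtain s t s' t' where "h s t = i" "h s' t' = i" "p = (alpha i t, beta i s)" "q = (alpha i t', beta i s')"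
      "alpha i t = alpha i t'" unfolding C_def by auto
    then show "p = q" using inj_aux[OF i] by (metis linorder_neqE_linordered_idom)
  qed
  have sub: "fst ` C \<subseteq> J" unfolding C_def using alpha_J[OF i] by auto
  then have "finite (fst ` C)" using J_fin finite_subset by blast
  then have "finite C" using inj finite_imageD by blast
  moreover have "card C = card (fst ` C)" using inj card_image by fastforce
  moreover have "card (fst ` C) \<le> card J" using sub J_fin card_mono by blast
  ultimately show ?thesis using J_fin by auto
qed

end

lemma triv_or_pos: "(\<forall>g::'g::lattice_ab_group_add. g = 0) \<or> (\<exists>p::'g. 0 < p)"
proof (cases "\<forall>g::'g. g = 0")
  case False
  then obtain e :: 'g where e: "e \<noteq> 0" by auto
  show ?thesis
  proof (cases "e \<le> 0")
    case True then have "0 < - e" using e by (simp add: less_le)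
    then show ?thesis by blast
  next
    case False
    have "0 \<le> sup e 0" by simp
    moreover have "sup e 0 \<noteq> 0" using False by (metis sup.cobounded1)
    ultimately have "0 < sup e 0" by (simp add: less_le)
    then show ?thesis by blast
  qed
qed simp

lemma inf_attained:
  fixes Y :: "(int \<times> 'g::lattice_ab_group_add) set"
  assumes k: "k \<ge> 1" and Y: "Y \<subseteq> gamma_lex k" and inf: "is_inf_in (gamma_lex k) Y (0,0)"
  shows "\<exists>y\<in>Y. fst y = 0"
proof (rule ccontr)
  assume "\<not> ?thesis"
  then have ge: "fst y \<ge> 1" if "y \<in> Y" for y
    using Y that unfolding gamma_lex_def lex_le_def by force
  from triv_or_pos[where 'g='g] show False
  proof
    assume tr: "\<forall>g::'g. g = 0"
    have "(1::int, 0::'g) \<in> gamma_lex k" using k unfolding gamma_lex_def lex_le_def by auto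
    moreover have "\<forall>y\<in>Y. lex_le (1, 0) y" using ge tr unfolding lex_le_def by (metis order_le_less order_refl fst_conv snd_conv)
    ultimately have "lex_le (1::int, 0::'g) (0, 0)" using inf unfolding is_inf_in_def by blast
    then show False unfolding lex_le_def by auto
  next
    assume "\<exists>p::'g. 0 < p"
    then obtain p :: 'g where p: "0 < p" by blast
    have "(0::int, p) \<in> gamma_lex k" using k p unfolding gamma_lex_def lex_le_def by auto
    moreover have "\<forall>y\<in>Y. lex_le (0, p) y" using ge unfolding lex_le_def by force
    ultimately have "lex_le (0::int, p) (0, 0)" using inf unfolding is_inf_in_def by blast
    then show False using p unfolding lex_le_def by auto
  qed
qed

lemma sup_attained:
  fixes Y :: "(int \<times> 'g::lattice_ab_group_add) set"
  assumes Y: "Y \<subseteq> gamma_lex k" and ne: "Y \<noteq> {}" and sup: "is_sup_in (gamma_lex k) Y x"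
  shows "\<exists>y\<in>Y. fst y = fst x"
proof (rule ccontr)
  assume "\<not> ?thesis"
  moreover have "fst y \<le> fst x" if "y \<in> Y" for y
    using sup that unfolding is_sup_in_def lex_le_def by force
  ultimately have lt: "fst y < fst x" if "y \<in> Y" for y using that by (meson order_le_less)
  obtain y0 where "y0 \<in> Y" using ne by auto
  then have "0 \<le> fst y0" using Y unfolding gamma_lex_def lex_le_def by force
  moreover have "fst y0 < fst x" using lt \<open>y0 \<in> Y\<close> by blast
  ultimately have x1: "fst x \<ge> 1" by auto
  have xg: "x \<in> gamma_lex k" using sup unfolding is_sup_in_def by auto
  then have xk: "fst x \<le> int k" "fst x = int k \<longrightarrow> snd x \<le> 0" unfolding gamma_lex_def lex_le_def by auto
  from triv_or_pos[where 'g='g] show False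
  proof
    assume tr: "\<forall>g::'g. g = 0"
    have "(fst x - 1, 0::'g) \<in> gamma_lex k" using x1 xk unfolding gamma_lex_def lex_le_def by auto
    moreover have "\<forall>y\<in>Y. lex_le y (fst x - 1, 0)" using lt tr unfolding lex_le_def
      by (metis fst_conv snd_conv order_refl zle_diff1_eq order_le_less)
    ultimately have "lex_le x (fst x - 1, 0)" using sup unfolding is_sup_in_def by blast
    then show False unfolding lex_le_def by auto
  next
    assume "\<exists>p::'g. 0 < p"
    then obtain p :: 'g where p: "0 < p" by blast
    have "(fst x, snd x - p) \<in> gamma_lex k" using x1 xk p unfolding gamma_lex_def lex_le_def
      by (auto simp: less_le)
    moreover have "\<forall>y\<in>Y. lex_le y (fst x, snd x - p)" using lt unfolding lex_le_def by force
    ultimately have "lex_le x (fst x, snd x - p)" using sup unfolding is_sup_in_def by blast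
    then show False using p unfolding lex_le_def by auto
  qed
qed

theorem theorem4p4:
  fixes k :: nat and F :: "real \<times> real \<Rightarrow> int \<times> 'g::lattice_ab_group_add"
  assumes "k \<ge> 1"
    and "dedekind_sigma_complete TYPE('g)"
    and "spectral_resolution2 k F"
  shows "(\<forall>i\<in>{1..int k}. level_set F i \<noteq> {} \<longrightarrow>
            finite (char_points F i) \<and> card (char_points F i) \<le> k) \<and>
         finite (all_char_points F) \<and> card (all_char_points F) \<le> k ^ 2"
proof -
  note sr = assms(3)[unfolded spectral_resolution2_def]
  have gam: "F p \<in> gamma_lex k" for p using sr by blast
  have srmono: "\<forall>s t s' t'. s \<le> s' \<and> t \<le> t' \<longrightarrow> lex_le (F (s, t)) (F (s', t'))" using sr by blast
  have srsup: "\<forall>s t. is_sup_in (gamma_lex k) {F (s', t') | s' t'. s' < s \<and> t' < t} (F (s, t))" using sr by blast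
  have srinf1: "\<forall>t. is_inf_in (gamma_lex k) {F (s, t) | s. True} (0, 0)" using sr by blast
  have srinf2: "\<forall>s. is_inf_in (gamma_lex k) {F (s, t) | t. True} (0, 0)" using sr by blast
  have srrect: "\<forall>a1 b1 a2 b2. a1 \<le> b1 \<and> a2 \<le> b2 \<longrightarrow>
        lex_le (0, 0) (F (b1, b2) - F (a1, b2) - F (b1, a2) + F (a1, a2))" using sr by blast
  have gb: "0 \<le> fst (F p)" "fst (F p) \<le> int k" for p
    using gam[of p] unfolding gamma_lex_def lex_le_def by auto
  define h where "h s t = fst (F (s,t))" for s t
  interpret H: hfun h k
  proof
    fix s s' t t' :: real assume "s \<le> s'" "t \<le> t'"
    then have "lex_le (F (s, t)) (F (s', t'))" using srmono by blast
    then show "h s t \<le> h s' t'" unfolding h_def lex_le_def by auto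
  next
    fix s t show "0 \<le> h s t" "h s t \<le> int k" unfolding h_def using gb by auto
  next
    fix a1 b1 a2 b2 :: real assume "a1 \<le> b1" "a2 \<le> b2"
    then have "lex_le (0, 0) (F (b1, b2) - F (a1, b2) - F (b1, a2) + F (a1, a2))" using srrect by blast
    then have "0 \<le> fst (F (b1, b2) - F (a1, b2) - F (b1, a2) + F (a1, a2))" unfolding lex_le_def by auto
    then show "h a1 b2 + h b1 a2 \<le> h b1 b2 + h a1 a2" unfolding h_def by simp
  next
    fix t
    have "\<exists>y\<in>{F (s, t) |s. True}. fst y = 0"
    proof (rule inf_attained[OF assms(1)])
      show "{F (s, t) |s. True} \<subseteq> gamma_lex k" using gam by blast
      show "is_inf_in (gamma_lex k) {F (s, t) |s. True} (0, 0)" using srinf1 by blast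
    qed
    then show "\<exists>s. h s t = 0" unfolding h_def by blast
  next
    fix s
    have "\<exists>y\<in>{F (s, t) |t. True}. fst y = 0"
    proof (rule inf_attained[OF assms(1)])
      show "{F (s, t) |t. True} \<subseteq> gamma_lex k" using gam by blast
      show "is_inf_in (gamma_lex k) {F (s, t) |t. True} (0, 0)" using srinf2 by blast
    qed
    then show "\<exists>t. h s t = 0" unfolding h_def by blast
  next
    fix s t
    have "\<exists>y\<in>{F (s', t') | s' t'. s' < s \<and> t' < t}. fst y = fst (F (s,t))"
    proof (rule sup_attained)
      show "{F (s', t') | s' t'. s' < s \<and> t' < t} \<subseteq> gamma_lex k" using gam by auto
      show "{F (s', t') | s' t'. s' < s \<and> t' < t} \<noteq> {}"
      proof -
        have "F (s - 1, t - 1) \<in> {F (s', t') | s' t'. s' < s \<and> t' < t}" by force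
        then show ?thesis by blast
      qed
      show "is_sup_in (gamma_lex k) {F (s', t') | s' t'. s' < s \<and> t' < t} (F (s, t))" using srsup by blast
    qed
    then show "\<exists>s'<s. \<exists>t'<t. h s' t' = h s t" unfolding h_def by blast
  qed
  have cpeq: "char_points F i = (\<lambda>(s,t). (H.alpha i t, H.beta i s)) ` {(s,t). h s t = i}" for i
  proof -
    have "char_proj F i = (\<lambda>(s,t). (H.alpha i t, H.beta i s))"
      by (auto simp: fun_eq_iff char_proj_def level_set_def H.alpha_def H.beta_def h_def)
    moreover have "level_set F i = {(s,t). h s t = i}" by (auto simp: level_set_def h_def)
    ultimately show ?thesis unfolding char_points_def by simp
  qed
  have one: "finite (char_points F i) \<and> card (char_points F i) \<le> k" if "i \<ge> 1" for i
    using H.cp_bound[OF that] cpeq by simp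
  have eqU: "all_char_points F = (\<Union>i\<in>{1..int k}. char_points F i)"
  proof -
    have "char_points F i = {}" if "i > int k" for i
    proof -
      have "{p. fst (F p) = i} = {}" using gb that by (metis (mono_tags, lifting) empty_Collect_eq not_le)
      then show ?thesis unfolding char_points_def level_set_def by simp
    qed
    then show ?thesis unfolding all_char_points_def
      by (auto simp: not_le) (metis atLeastAtMost_iff emptyE not_le)
  qed
  have c1: "card (\<Union>i\<in>{1..int k}. char_points F i) \<le> (\<Sum>i\<in>{1..int k}. card (char_points F i))"
    by (rule card_UN_le) simp
  have c2: "(\<Sum>i\<in>{1..int k}. card (char_points F i)) \<le> (\<Sum>i\<in>{1..int k}. k)"
    using one by (intro sum_mono) simp
  have c3: "(\<Sum>i\<in>{1..int k}. k) = k * k" by simp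
  have card: "card (all_char_points F) \<le> k ^ 2"
    unfolding eqU power2_eq_square using c1 c2 c3 by linarith
  have fin: "finite (all_char_points F)"
    unfolding eqU using one by (intro finite_UN_I) simp_all
  show ?thesis
  proof (intro conjI ballI impI fin card)
    fix i assume "i \<in> {1..int k}"
    then have "i \<ge> 1" by simp
    then show "finite (char_points F i)" "card (char_points F i) \<le> k" using one by blast+
  qed
qed

end
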